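(* For every $a>0$, one has $$\sqrt{\mathbf{\Gamma}_a}+\sqrt{\mathbf{\Gamma}_a}\;\stackrel{d}{=}\;\sqrt{\mathbf{\Gamma}_{2a}\times\left(1+\sqrt{\mathbf{B}_{a,1/2}}\right)},$$ where all random variables appearing on the same side of the identity are independent.
   Context: For $t>0$, $\mathbf{\Gamma}_t$ denotes a gamma random variable with density $\frac{1}{\Gamma(t)}x^{t-1}e^{-x}$ on $(0,\infty)$; for $p,q>0$, $\mathbf{B}_{p,q}$ denotes a beta random variable with density $\frac{\Gamma(p+q)}{\Gamma(p)\Gamma(q)}x^{p-1}(1-x)^{q-1}$ on $(0,1)$. $\stackrel{d}{=}$ denotes equality in distribution. *)

theory Defs
  imports "HOL-Probability.Probability"
begin

definition gamma_density :: "real \<Rightarrow> real \<Rightarrow> real" where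
  "gamma_density t x = (if 0 < x then x powr (t - 1) * exp (- x) / Gamma t else 0)"

definition beta_density :: "real \<Rightarrow> real \<Rightarrow> real \<Rightarrow> real" where
  "beta_density p q x = (if 0 < x \<and> x < 1
     then Gamma (p + q) / (Gamma p * Gamma q) * x powr (p - 1) * (1 - x) powr (q - 1) else 0)"

end

theory Submission
  imports Defs
begin

lemma SUP_ind_ennreal:
  fixes h :: "real \<Rightarrow> real"
  assumes "incseq S"
  shows "(SUP n. ennreal (h y * indicator (S n) y)) = ennreal (h y * indicator (\<Union>n. S n) y)"
proof (cases "y \<in> (\<Union>n. S n)")
  case True
  then obtain N where N: "y \<in> S N" by auto
  have le: "ennreal (h y * indicator (S n) y) \<le> ennreal (h y)" for n
    by (cases "y \<in> S n"; cases "h y \<ge> 0") (auto simp: ennreal_neg)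
  have "(SUP n. ennreal (h y * indicator (S n) y)) = ennreal (h y)"
  proof (rule antisym)
    show "(SUP n. ennreal (h y * indicator (S n) y)) \<le> ennreal (h y)"
      by (rule SUP_least) (rule le)
    have "ennreal (h y) = ennreal (h y * indicator (S N) y)" using N by simp
    also have "\<dots> \<le> (SUP n. ennreal (h y * indicator (S n) y))" by (rule SUP_upper) simp
    finally show "ennreal (h y) \<le> (SUP n. ennreal (h y * indicator (S n) y))" .
  qed
  then show ?thesis using True by simp
next
  case False
  then show ?thesis by (auto simp: indicator_def)
qed

lemma nn_subst_open:
  fixes f g g' :: "real \<Rightarrow> real" and l u :: "nat \<Rightarrow> real" and I :: "real set"
  assumes Mf[measurable]: "f \<in> borel_measurable borel"
  and Mg[measurable]: "g \<in> borel_measurable borel" and Mg'[measurable]: "g' \<in> borel_measurable borel"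
  and Iiv: "\<And>x y z. x \<in> I \<Longrightarrow> z \<in> I \<Longrightarrow> x \<le> y \<Longrightarrow> y \<le> z \<Longrightarrow> y \<in> I"
  and derivg: "\<And>x. x \<in> I \<Longrightarrow> (g has_real_derivative g' x) (at x)"
  and contg': "continuous_on I g'"
  and nonneg: "\<And>x. x \<in> I \<Longrightarrow> 0 \<le> g' x"
  and lu: "\<And>n. l n \<le> u n" "\<And>n. l n \<in> I" "\<And>n. u n \<in> I" "decseq l" "incseq u"
     "\<And>x. x \<in> I \<Longrightarrow> \<exists>n. l n \<le> x \<and> x \<le> u n"
  shows "(\<integral>\<^sup>+y. ennreal (f y * indicator (g ` I) y) \<partial>lborel)
       = (\<integral>\<^sup>+x. ennreal (f (g x) * g' x * indicator I x) \<partial>lborel)"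
proof -
  have sub: "{l n..u n} \<subseteq> I" for n
  proof
    fix x assume "x \<in> {l n..u n}"
    then show "x \<in> I" using Iiv[OF lu(2)[of n] lu(3)[of n]] by auto
  qed
  have mono: "g x \<le> g y" if "x \<in> I" "y \<in> I" "x \<le> y" for x y
  proof -
    have "{x..y} \<subseteq> I" using Iiv[OF that(1) that(2)] by auto
    then show ?thesis using that
      by (intro deriv_nonneg_imp_mono[of x y g g']) (auto intro: derivg nonneg)
  qed
  have contg: "continuous_on I g"
    using derivg by (meson DERIV_isCont continuous_at_imp_continuous_on)
  have Ieq: "(\<Union>n. {l n..u n}) = I"
  proof
    show "(\<Union>n. {l n..u n}) \<subseteq> I" using sub by blast
    show "I \<subseteq> (\<Union>n. {l n..u n})"
    proof
      fix x assume "x \<in> I"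
      then obtain n where "l n \<le> x" "x \<le> u n" using lu(6) by blast
      then show "x \<in> (\<Union>n. {l n..u n})" by auto
    qed
  qed
  have gIeq: "(\<Union>n. {g (l n)..g (u n)}) = g ` I"
  proof
    show "(\<Union>n. {g (l n)..g (u n)}) \<subseteq> g ` I"
    proof
      fix y assume "y \<in> (\<Union>n. {g (l n)..g (u n)})"
      then obtain n where n: "g (l n) \<le> y" "y \<le> g (u n)" by auto
      have "continuous_on {l n..u n} g" using contg sub continuous_on_subset by blast
      then obtain x where "l n \<le> x" "x \<le> u n" "g x = y"
        using IVT'[of g "l n" y "u n"] n lu(1) by blast
      then show "y \<in> g ` I" using sub by force
    qed
  next
    show "g ` I \<subseteq> (\<Union>n. {g (l n)..g (u n)})"
    proof
      fix y assume "y \<in> g ` I"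
      then obtain x where x: "x \<in> I" "y = g x" by auto
      then obtain n where "l n \<le> x" "x \<le> u n" using lu(6) by blast
      then have "g (l n) \<le> y" "y \<le> g (u n)" using mono[OF lu(2)[of n] x(1)] mono[OF x(1) lu(3)[of n]] x(2) by auto
      then show "y \<in> (\<Union>n. {g (l n)..g (u n)})" by auto
    qed
  qed
  have inc1: "incseq (\<lambda>n. {l n..u n})"
    using lu(4,5) by (auto simp: incseq_def decseq_def intro: order_trans)
  have inc2: "incseq (\<lambda>n. {g (l n)..g (u n)})"
  proof (rule incseq_SucI)
    fix n
    have "g (l (Suc n)) \<le> g (l n)" using mono[OF lu(2) lu(2)] lu(4) by (simp add: decseq_Suc_iff)
    moreover have "g (u n) \<le> g (u (Suc n))" using mono[OF lu(3) lu(3)] lu(5) by (simp add: incseq_Suc_iff)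
    ultimately show "{g (l n)..g (u n)} \<subseteq> {g (l (Suc n))..g (u (Suc n))}" by auto
  qed
  have step: "(\<integral>\<^sup>+y. ennreal (f y * indicator {g (l n)..g (u n)} y) \<partial>lborel)
       = (\<integral>\<^sup>+x. ennreal (f (g x) * g' x * indicator {l n..u n} x) \<partial>lborel)" for n
  proof (rule nn_integral_substitution)
    show "set_borel_measurable borel {g (l n)..g (u n)} f" unfolding set_borel_measurable_def by measurable
    show "x \<in> {l n..u n} \<Longrightarrow> (g has_real_derivative g' x) (at x)" for x using sub[of n] derivg by blast
    show "x \<in> {l n..u n} \<Longrightarrow> 0 \<le> g' x" for x using sub[of n] nonneg by blast
    show "continuous_on {l n..u n} g'" using sub[of n] contg' continuous_on_subset by blast
  qed (rule lu(1))
  have "(\<integral>\<^sup>+y. ennreal (f y * indicator (g ` I) y) \<partial>lborel)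
      = (\<integral>\<^sup>+y. (SUP n. ennreal (f y * indicator {g (l n)..g (u n)} y)) \<partial>lborel)"
    by (simp add: SUP_ind_ennreal[OF inc2] gIeq)
  also have "\<dots> = (SUP n. \<integral>\<^sup>+y. ennreal (f y * indicator {g (l n)..g (u n)} y) \<partial>lborel)"
  proof (rule nn_integral_monotone_convergence_SUP)
    show "incseq (\<lambda>n y. ennreal (f y * indicator {g (l n)..g (u n)} y))"
      using inc2 by (auto simp: incseq_def le_fun_def indicator_def ennreal_neg subset_iff)
  qed simp
  also have "\<dots> = (SUP n. \<integral>\<^sup>+x. ennreal (f (g x) * g' x * indicator {l n..u n} x) \<partial>lborel)"
    by (simp add: step)
  also have "\<dots> = (\<integral>\<^sup>+x. (SUP n. ennreal (f (g x) * g' x * indicator {l n..u n} x)) \<partial>lborel)"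
  proof (rule nn_integral_monotone_convergence_SUP[symmetric])
    show "incseq (\<lambda>n x. ennreal (f (g x) * g' x * indicator {l n..u n} x))"
      using inc1 by (auto simp: incseq_def le_fun_def indicator_def ennreal_neg subset_iff)
    show "(\<lambda>x. ennreal (f (g x) * g' x * indicator {l n..u n} x)) \<in> borel_measurable lborel" for n
      by simp
  qed
  also have "\<dots> = (\<integral>\<^sup>+x. ennreal (f (g x) * g' x * indicator I x) \<partial>lborel)"
    using SUP_ind_ennreal[OF inc1, where h="\<lambda>x. f (g x) * g' x"] Ieq by simp
  finally show ?thesis .
qed

lemma nn_subst_pos:
  fixes f g g' :: "real \<Rightarrow> real"
  assumes Mf: "f \<in> borel_measurable borel"
  and Mg: "g \<in> borel_measurable borel" and Mg': "g' \<in> borel_measurable borel"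
  and derivg: "\<And>x. 0 < x \<Longrightarrow> (g has_real_derivative g' x) (at x)"
  and contg': "continuous_on {0<..} g'"
  and nonneg: "\<And>x. 0 < x \<Longrightarrow> 0 \<le> g' x"
  shows "(\<integral>\<^sup>+y. ennreal (f y * indicator (g ` {0<..}) y) \<partial>lborel)
       = (\<integral>\<^sup>+x. ennreal (f (g x) * g' x * indicator {0<..} x) \<partial>lborel)"
proof (rule nn_subst_open[OF Mf Mg Mg', where l="\<lambda>n. 1 / (real n + 1)" and u="\<lambda>n. real n + 1"])
  show "decseq (\<lambda>n. 1 / (real n + 1))"
    by (auto simp: decseq_def intro!: divide_left_mono)
  show "incseq (\<lambda>n. real n + 1)" by (auto simp: incseq_def)
  show "1 / (real n + 1) \<le> real n + 1" for n
    by (rule order_trans[of _ 1]) (auto simp: field_simps)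
  show "\<exists>n. 1 / (real n + 1) \<le> x \<and> x \<le> real n + 1" if "x \<in> {0<..}" for x
  proof -
    from that have x: "0 < x" by simp
    obtain n :: nat where n: "max x (1/x) \<le> real n" using real_arch_simple by blast
    have "1 / (real n + 1) \<le> x"
    proof -
      have "1 / x < real n + 1" using n by linarith
      then show ?thesis using x by (simp add: field_simps)
    qed
    moreover have "x \<le> real n + 1" using n by linarith
    ultimately show ?thesis by blast
  qed
qed (auto intro: derivg nonneg contg')

lemma nn_subst_01:
  fixes f g g' :: "real \<Rightarrow> real"
  assumes Mf: "f \<in> borel_measurable borel"
  and Mg: "g \<in> borel_measurable borel" and Mg': "g' \<in> borel_measurable borel"
  and derivg: "\<And>x. 0 < x \<Longrightarrow> x < 1 \<Longrightarrow> (g has_real_derivative g' x) (at x)"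
  and contg': "continuous_on {0<..<1} g'"
  and nonneg: "\<And>x. 0 < x \<Longrightarrow> x < 1 \<Longrightarrow> 0 \<le> g' x"
  shows "(\<integral>\<^sup>+y. ennreal (f y * indicator (g ` {0<..<1}) y) \<partial>lborel)
       = (\<integral>\<^sup>+x. ennreal (f (g x) * g' x * indicator {0<..<1} x) \<partial>lborel)"
proof (rule nn_subst_open[OF Mf Mg Mg', where l="\<lambda>n. 1 / (real n + 2)" and u="\<lambda>n. 1 - 1 / (real n + 2)"])
  show "decseq (\<lambda>n. 1 / (real n + 2))"
    by (auto simp: decseq_def intro!: divide_left_mono)
  show "incseq (\<lambda>n. 1 - 1 / (real n + 2))" 
    by (auto simp: incseq_def intro!: divide_left_mono)
  show "1 / (real n + 2) \<le> 1 - 1 / (real n + 2)" for n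
    by (simp add: field_simps)
  show "\<exists>n. 1 / (real n + 2) \<le> x \<and> x \<le> 1 - 1 / (real n + 2)" if "x \<in> {0<..<1}" for x
  proof -
    from that have x: "0 < x" "x < 1" by auto
    obtain n :: nat where n: "max (1/x) (1/(1-x)) \<le> real n" using real_arch_simple by blast
    have "1 / (real n + 2) \<le> x"
    proof -
      have "1 / x < real n + 2" using n by linarith
      then show ?thesis using x by (simp add: field_simps)
    qed
    moreover have "x \<le> 1 - 1 / (real n + 2)"
    proof -
      have "1 / (1 - x) < real n + 2" using n by linarith
      then have "1 < (real n + 2) * (1 - x)" using x by (simp add: field_simps)
      then show ?thesis using x by (simp add: field_simps)
    qed
    ultimately show ?thesis by blast
  qed
qed (auto intro: derivg nonneg contg' simp: field_simps)

lemma pw1: fixes u a :: real assumes "0 < u" shows "u * (u\<^sup>2) powr (a - 1) = u powr (2*a - 1)"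
proof -
  have "(u\<^sup>2) powr (a - 1) = (u powr 2) powr (a - 1)" using assms by simp
  also have "\<dots> = u powr (2 * (a - 1))" by (simp add: powr_powr)
  finally show ?thesis using assms by (simp add: powr_mult_base algebra_simps)
qed

lemma gd_pos: "0 < x \<Longrightarrow> gamma_density t x = x powr (t - 1) * exp (- x) / Gamma t"
  by (simp add: gamma_density_def)
lemma gd_nonpos: "x \<le> 0 \<Longrightarrow> gamma_density t x = 0"
  by (simp add: gamma_density_def)

lemma sq_subst:
  fixes h :: "real \<Rightarrow> real"
  assumes Mh[measurable]: "h \<in> borel_measurable borel" and h0: "\<And>y. y \<le> 0 \<Longrightarrow> h y = 0"
  shows "(\<integral>\<^sup>+y. ennreal (h y) \<partial>lborel) = (\<integral>\<^sup>+v. ennreal (2 * v * h (v\<^sup>2) * indicator {0<..} v) \<partial>lborel)"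
proof -
  have img: "(\<lambda>v::real. v\<^sup>2) ` {0<..} = {0<..}"
  proof
    show "(\<lambda>v::real. v\<^sup>2) ` {0<..} \<subseteq> {0<..}" by auto
    show "{0<..} \<subseteq> (\<lambda>v::real. v\<^sup>2) ` {0<..}"
    proof
      fix y :: real assume "y \<in> {0<..}"
      then have "y = (sqrt y)\<^sup>2" "sqrt y \<in> {0<..}" by auto
      then show "y \<in> (\<lambda>v. v\<^sup>2) ` {0<..}" by blast
    qed
  qed
  have "(\<integral>\<^sup>+y. ennreal (h y) \<partial>lborel) = (\<integral>\<^sup>+y. ennreal (h y * indicator ((\<lambda>v. v\<^sup>2) ` {0<..}) y) \<partial>lborel)"
    by (intro nn_integral_cong) (auto simp: img indicator_def h0)
  also have "\<dots> = (\<integral>\<^sup>+v. ennreal (h (v\<^sup>2) * (2 * v) * indicator {0<..} v) \<partial>lborel)"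
    by (rule nn_subst_pos[where g'="\<lambda>v. 2 * v"]) (auto intro!: derivative_eq_intros continuous_intros)
  also have "\<dots> = (\<integral>\<^sup>+v. ennreal (2 * v * h (v\<^sup>2) * indicator {0<..} v) \<partial>lborel)"
    by (simp add: mult_ac)
  finally show ?thesis .
qed

definition GG :: "real \<Rightarrow> (real \<Rightarrow> real) \<Rightarrow> real \<Rightarrow> real \<Rightarrow> real" where "GG a F u v = (if 0 < u \<and> 0 < v then 4 / (Gamma a)\<^sup>2 * u powr (2*a-1) * v powr (2*a-1) * exp (-(u\<^sup>2 + v\<^sup>2)) * F (u + v) else 0)"

lemma GG_sym: "GG a F u v = GG a F v u"
  by (simp add: GG_def mult_ac add_ac)

lemma GG_meas: assumes [measurable]: "F \<in> borel_measurable borel" shows "(\<lambda>(u, v). GG a F u v) \<in> borel_measurable (lborel \<Otimes>\<^sub>M lborel)"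
  unfolding GG_def by measurable

lemma lhs_step1:
  fixes F :: "real \<Rightarrow> real"
  assumes a: "0 < a" and MF[measurable]: "F \<in> borel_measurable borel"
  shows "(\<integral>\<^sup>+x. \<integral>\<^sup>+y. ennreal (gamma_density a x * gamma_density a y * F (sqrt x + sqrt y)) \<partial>lborel \<partial>lborel)
       = (\<integral>\<^sup>+u. \<integral>\<^sup>+v. ennreal (GG a F u v) \<partial>lborel \<partial>lborel)"
proof -
  have Mg[measurable]: "(\<lambda>x. gamma_density t x) \<in> borel_measurable borel" for t
    unfolding gamma_density_def by measurable
  have s1: "(\<integral>\<^sup>+x. \<integral>\<^sup>+y. ennreal (gamma_density a x * gamma_density a y * F (sqrt x + sqrt y)) \<partial>lborel \<partial>lborel)
     = (\<integral>\<^sup>+x. \<integral>\<^sup>+v. ennreal (2 * v * (gamma_density a x * gamma_density a (v\<^sup>2) * F (sqrt x + v)) * indicator {0<..} v) \<partial>lborel \<partial>lborel)"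
  proof (rule nn_integral_cong)
    fix x :: real
    have "(\<integral>\<^sup>+y. ennreal (gamma_density a x * gamma_density a y * F (sqrt x + sqrt y)) \<partial>lborel)
      = (\<integral>\<^sup>+v. ennreal (2 * v * (gamma_density a x * gamma_density a (v\<^sup>2) * F (sqrt x + sqrt (v\<^sup>2))) * indicator {0<..} v) \<partial>lborel)"
      by (rule sq_subst[where h="\<lambda>y. gamma_density a x * gamma_density a y * F (sqrt x + sqrt y)"]) (auto simp: gd_nonpos)
    also have "\<dots> = (\<integral>\<^sup>+v. ennreal (2 * v * (gamma_density a x * gamma_density a (v\<^sup>2) * F (sqrt x + v)) * indicator {0<..} v) \<partial>lborel)"
      by (intro nn_integral_cong) (auto simp: indicator_def)
    finally show "(\<integral>\<^sup>+y. ennreal (gamma_density a x * gamma_density a y * F (sqrt x + sqrt y)) \<partial>lborel)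
      = (\<integral>\<^sup>+v. ennreal (2 * v * (gamma_density a x * gamma_density a (v\<^sup>2) * F (sqrt x + v)) * indicator {0<..} v) \<partial>lborel)" .
  qed
  have s2: "(\<integral>\<^sup>+x. \<integral>\<^sup>+v. ennreal (2 * v * (gamma_density a x * gamma_density a (v\<^sup>2) * F (sqrt x + v)) * indicator {0<..} v) \<partial>lborel \<partial>lborel) = (\<integral>\<^sup>+v. \<integral>\<^sup>+x. ennreal (2 * v * (gamma_density a x * gamma_density a (v\<^sup>2) * F (sqrt x + v)) * indicator {0<..} v) \<partial>lborel \<partial>lborel)"
    by (rule lborel_pair.Fubini'[symmetric]) measurable
  have s3: "(\<integral>\<^sup>+v. \<integral>\<^sup>+x. ennreal (2 * v * (gamma_density a x * gamma_density a (v\<^sup>2) * F (sqrt x + v)) * indicator {0<..} v) \<partial>lborel \<partial>lborel) = (\<integral>\<^sup>+v. \<integral>\<^sup>+u. ennreal (GG a F v u) \<partial>lborel \<partial>lborel)"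
  proof (rule nn_integral_cong)
    fix v :: real
    have "(\<integral>\<^sup>+x. ennreal (2 * v * (gamma_density a x * gamma_density a (v\<^sup>2) * F (sqrt x + v)) * indicator {0<..} v) \<partial>lborel)
      = (\<integral>\<^sup>+u. ennreal (2 * u * (2 * v * (gamma_density a (u\<^sup>2) * gamma_density a (v\<^sup>2) * F (sqrt (u\<^sup>2) + v)) * indicator {0<..} v) * indicator {0<..} u) \<partial>lborel)"
      by (rule sq_subst[where h="\<lambda>x. 2 * v * (gamma_density a x * gamma_density a (v\<^sup>2) * F (sqrt x + v)) * indicator {0<..} v"]) (auto simp: gd_nonpos)
    also have "\<dots> = (\<integral>\<^sup>+u. ennreal (GG a F v u) \<partial>lborel)"
    proof (intro nn_integral_cong)
      fix u :: real
      show "ennreal (2 * u * (2 * v * (gamma_density a (u\<^sup>2) * gamma_density a (v\<^sup>2) * F (sqrt (u\<^sup>2) + v)) * indicator {0<..} v) * indicator {0<..} u) = ennreal (GG a F v u)"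
      proof (cases "0 < u \<and> 0 < v")
        case True
        then have "2 * u * (2 * v * (gamma_density a (u\<^sup>2) * gamma_density a (v\<^sup>2) * F (sqrt (u\<^sup>2) + v)) * indicator {0<..} v) * indicator {0<..} u
           = 4 / (Gamma a)\<^sup>2 * (u * (u\<^sup>2) powr (a - 1)) * (v * (v\<^sup>2) powr (a - 1)) * (exp (-(u\<^sup>2)) * exp (-(v\<^sup>2))) * F (u + v)"
          by (simp add: gd_pos field_simps power2_eq_square)
        also have "exp (-(u\<^sup>2)) * exp (-(v\<^sup>2)) = exp (-(u\<^sup>2 + v\<^sup>2))" by (simp add: exp_add[symmetric])
        also have "4 / (Gamma a)\<^sup>2 * (u * (u\<^sup>2) powr (a - 1)) * (v * (v\<^sup>2) powr (a - 1)) * exp (-(u\<^sup>2 + v\<^sup>2)) * F (u + v) = GG a F u v"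
          using True by (simp add: pw1 GG_def)
        also have "\<dots> = GG a F v u" by (rule GG_sym)
        finally show ?thesis by simp
      qed (auto simp: GG_def indicator_def)
    qed
    finally show "(\<integral>\<^sup>+x. ennreal (2 * v * (gamma_density a x * gamma_density a (v\<^sup>2) * F (sqrt x + v)) * indicator {0<..} v) \<partial>lborel)
      = (\<integral>\<^sup>+u. ennreal (GG a F v u) \<partial>lborel)" .
  qed
  have s4: "(\<integral>\<^sup>+v. \<integral>\<^sup>+u. ennreal (GG a F v u) \<partial>lborel \<partial>lborel) = (\<integral>\<^sup>+u. \<integral>\<^sup>+v. ennreal (GG a F u v) \<partial>lborel \<partial>lborel)"
    by (simp add: GG_sym[of a F])
  show ?thesis using s1 s2 s3 s4 by simp
qed
lemma pred_lessThan[measurable]: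
  assumes [measurable]: "f \<in> borel_measurable M" "g \<in> borel_measurable M"
  shows "Measurable.pred M (\<lambda>x. (f x::real) \<in> {..<g x})"
  unfolding lessThan_iff by measurable

lemma pred_greaterThan[measurable]:
  assumes [measurable]: "f \<in> borel_measurable M" "g \<in> borel_measurable M"
  shows "Measurable.pred M (\<lambda>x. (f x::real) \<in> {g x<..})"
  unfolding greaterThan_iff by measurable

lemma sym_step:
  fixes F :: "real \<Rightarrow> real"
  assumes MF[measurable]: "F \<in> borel_measurable borel"
  shows "(\<integral>\<^sup>+u. \<integral>\<^sup>+v. ennreal (GG a F u v) \<partial>lborel \<partial>lborel)
    = (\<integral>\<^sup>+u. \<integral>\<^sup>+v. ennreal (GG a F u v * indicator {..<u} v) \<partial>lborel \<partial>lborel)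
    + (\<integral>\<^sup>+u. \<integral>\<^sup>+v. ennreal (GG a F u v * indicator {..<u} v) \<partial>lborel \<partial>lborel)"
proof -
  have MG[measurable]: "(\<lambda>(u, v). GG a F u v) \<in> borel_measurable (lborel \<Otimes>\<^sub>M lborel)"
    by (rule GG_meas) (rule MF)
  have MG'[measurable]: "(\<lambda>x. GG a F (fst x) (snd x)) \<in> borel_measurable (lborel \<Otimes>\<^sub>M lborel)"
    using MG by (simp add: case_prod_beta')
  have MGu[measurable]: "GG a F u \<in> borel_measurable lborel" for u
    unfolding GG_def by measurable
  have s1: "(\<integral>\<^sup>+u. \<integral>\<^sup>+v. ennreal (GG a F u v) \<partial>lborel \<partial>lborel)
    = (\<integral>\<^sup>+u. (\<integral>\<^sup>+v. ennreal (GG a F u v * indicator {..<u} v) \<partial>lborel) + (\<integral>\<^sup>+v. ennreal (GG a F u v * indicator {u<..} v) \<partial>lborel) \<partial>lborel)"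
  proof (rule nn_integral_cong)
    fix u :: real
    have "(\<integral>\<^sup>+v. ennreal (GG a F u v) \<partial>lborel) = (\<integral>\<^sup>+v. ennreal (GG a F u v * indicator {..<u} v) + ennreal (GG a F u v * indicator {u<..} v) \<partial>lborel)"
      by (rule nn_integral_cong_AE) (use AE_lborel_singleton[of u] in \<open>auto simp: indicator_def\<close>)
    also have "\<dots> = (\<integral>\<^sup>+v. ennreal (GG a F u v * indicator {..<u} v) \<partial>lborel) + (\<integral>\<^sup>+v. ennreal (GG a F u v * indicator {u<..} v) \<partial>lborel)"
      by (rule nn_integral_add) auto
    finally show "(\<integral>\<^sup>+v. ennreal (GG a F u v) \<partial>lborel) = (\<integral>\<^sup>+v. ennreal (GG a F u v * indicator {..<u} v) \<partial>lborel) + (\<integral>\<^sup>+v. ennreal (GG a F u v * indicator {u<..} v) \<partial>lborel)" .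
  qed
  have s2: "(\<integral>\<^sup>+u. (\<integral>\<^sup>+v. ennreal (GG a F u v * indicator {..<u} v) \<partial>lborel) + (\<integral>\<^sup>+v. ennreal (GG a F u v * indicator {u<..} v) \<partial>lborel) \<partial>lborel)
    = (\<integral>\<^sup>+u. \<integral>\<^sup>+v. ennreal (GG a F u v * indicator {..<u} v) \<partial>lborel \<partial>lborel)
    + (\<integral>\<^sup>+u. \<integral>\<^sup>+v. ennreal (GG a F u v * indicator {u<..} v) \<partial>lborel \<partial>lborel)"
    by (rule nn_integral_add) measurable
  have s3: "(\<integral>\<^sup>+u. \<integral>\<^sup>+v. ennreal (GG a F u v * indicator {u<..} v) \<partial>lborel \<partial>lborel)
     = (\<integral>\<^sup>+v. \<integral>\<^sup>+u. ennreal (GG a F u v * indicator {u<..} v) \<partial>lborel \<partial>lborel)"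
    by (rule lborel_pair.Fubini'[symmetric]) measurable
  have s4: "(\<integral>\<^sup>+v. \<integral>\<^sup>+u. ennreal (GG a F u v * indicator {u<..} v) \<partial>lborel \<partial>lborel)
     = (\<integral>\<^sup>+u. \<integral>\<^sup>+v. ennreal (GG a F u v * indicator {..<u} v) \<partial>lborel \<partial>lborel)"
    by (intro nn_integral_cong) (simp add: GG_sym[of a F] indicator_def)
  show ?thesis using s1 s2 s3 s4 by simp
qed
definition HH :: "real \<Rightarrow> (real \<Rightarrow> real) \<Rightarrow> real \<Rightarrow> real \<Rightarrow> real" where
  "HH a F u w = (if 0 < u \<and> 0 < w \<and> w < 1 then 4 / (Gamma a)\<^sup>2 * u powr (4*a-1) * w powr (2*a-1) * exp (-(u\<^sup>2 * (1 + w\<^sup>2))) * F (u * (1 + w)) else 0)"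

lemma pw2: fixes u w a :: real assumes "0 < u" "0 < w"
  shows "u * (u powr (2*a-1) * (u * w) powr (2*a-1)) = u powr (4*a-1) * w powr (2*a-1)"
proof -
  have "u * (u powr (2*a-1) * (u * w) powr (2*a-1)) = (u * u powr (2*a-1) * u powr (2*a-1)) * w powr (2*a-1)"
    by (simp add: powr_mult)
  also have "u * u powr (2*a-1) * u powr (2*a-1) = u powr 1 * u powr (2*a-1) * u powr (2*a-1)"
    using assms by simp
  also have "\<dots> = u powr (1 + (2*a-1) + (2*a-1))" by (simp only: powr_add)
  also have "1 + (2*a-1) + (2*a-1) = 4*a-1" by simp
  finally show ?thesis by simp
qed

lemma stepB:
  fixes F :: "real \<Rightarrow> real"
  assumes MF[measurable]: "F \<in> borel_measurable borel"
  shows "(\<integral>\<^sup>+u. \<integral>\<^sup>+v. ennreal (GG a F u v * indicator {..<u} v) \<partial>lborel \<partial>lborel)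
    = (\<integral>\<^sup>+w. \<integral>\<^sup>+u. ennreal (HH a F u w) \<partial>lborel \<partial>lborel)"
proof -
  have MGu[measurable]: "GG a F u \<in> borel_measurable borel" for u
    unfolding GG_def by measurable
  have s1: "(\<integral>\<^sup>+u. \<integral>\<^sup>+v. ennreal (GG a F u v * indicator {..<u} v) \<partial>lborel \<partial>lborel)
    = (\<integral>\<^sup>+u. \<integral>\<^sup>+w. ennreal (HH a F u w) \<partial>lborel \<partial>lborel)"
  proof (rule nn_integral_cong)
    fix u :: real
    show "(\<integral>\<^sup>+v. ennreal (GG a F u v * indicator {..<u} v) \<partial>lborel) = (\<integral>\<^sup>+w. ennreal (HH a F u w) \<partial>lborel)"
    proof (cases "0 < u")
      case False
      then show ?thesis by (simp add: GG_def HH_def)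
    next
      case True
      have "(\<integral>\<^sup>+v. ennreal (GG a F u v * indicator {..<u} v) \<partial>lborel)
         = ennreal \<bar>u\<bar> * (\<integral>\<^sup>+w. ennreal (GG a F u (0 + u * w) * indicator {..<u} (0 + u * w)) \<partial>lborel)"
        by (rule nn_integral_real_affine) (use True in auto)
      also have "\<dots> = (\<integral>\<^sup>+w. ennreal u * ennreal (GG a F u (u * w) * indicator {..<u} (u * w)) \<partial>lborel)"
        using True by (simp add: nn_integral_cmult)
      also have "\<dots> = (\<integral>\<^sup>+w. ennreal (HH a F u w) \<partial>lborel)"
      proof (rule nn_integral_cong)
        fix w :: real
        show "ennreal u * ennreal (GG a F u (u * w) * indicator {..<u} (u * w)) = ennreal (HH a F u w)"
        proof (cases "0 < w \<and> w < 1")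
          case True2: True
          have "u * (GG a F u (u * w) * indicator {..<u} (u * w))
             = 4 / (Gamma a)\<^sup>2 * (u * (u powr (2*a-1) * (u * w) powr (2*a-1))) * exp (-(u\<^sup>2 + (u * w)\<^sup>2)) * F (u + u * w)"
            using True True2 by (simp add: GG_def indicator_def mult_ac)
          also have "\<dots> = 4 / (Gamma a)\<^sup>2 * (u powr (4*a-1) * w powr (2*a-1)) * exp (-(u\<^sup>2 + (u * w)\<^sup>2)) * F (u + u * w)"
            using True True2 by (simp only: pw2)
          also have "\<dots> = HH a F u w"
            using True True2 by (simp add: HH_def algebra_simps power2_eq_square)
          finally show ?thesis using True by (simp add: ennreal_mult'[symmetric])
        next
          case False2: False
          then have "GG a F u (u * w) * indicator {..<u} (u * w) = 0"
            using True by (auto simp: GG_def indicator_def zero_less_mult_iff)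
          moreover have "HH a F u w = 0" using False2 unfolding HH_def by auto
          ultimately show ?thesis by (metis ennreal_0 mult_zero_right mult_zero_left)
        qed
      qed
      finally show ?thesis .
    qed
  qed
  have s2: "(\<integral>\<^sup>+u. \<integral>\<^sup>+w. ennreal (HH a F u w) \<partial>lborel \<partial>lborel) = (\<integral>\<^sup>+w. \<integral>\<^sup>+u. ennreal (HH a F u w) \<partial>lborel \<partial>lborel)"
    by (rule lborel_pair.Fubini'[symmetric]) (unfold HH_def, measurable)
  show ?thesis using s1 s2 by simp
qed
definition KK :: "real \<Rightarrow> (real \<Rightarrow> real) \<Rightarrow> real \<Rightarrow> real \<Rightarrow> real" where
  "KK a F w s = (if 0 < w \<and> w < 1 \<and> 0 < s then 2 / (Gamma a)\<^sup>2 * w powr (2*a-1) * (1 + w\<^sup>2) powr (-2*a) * s powr (2*a-1) * exp (-s) * F (sqrt (s * (1 + 2*w/(1+w\<^sup>2)))) else 0)"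

lemma pw3: fixes s k a :: real assumes s: "0 < s" and k: "0 < k"
  shows "(sqrt s / sqrt k) powr (4*a-1) * (1 / (2 * sqrt s * sqrt k)) = s powr (2*a-1) * k powr (-2*a) / 2"
proof -
  have ss: "sqrt s = s powr (1/2)" using s by (simp add: powr_half_sqrt)
  have sk: "sqrt k = k powr (1/2)" using k by (simp add: powr_half_sqrt)
  have e1: "(sqrt s / sqrt k) powr (4*a-1) = s powr ((4*a-1)/2) / k powr ((4*a-1)/2)"
    unfolding ss sk by (simp add: powr_divide powr_powr)
  have e2: "s powr ((4*a-1)/2) = s powr (2*a-1) * s powr (1/2)"
  proof -
    have "(4*a-1)/2 = (2*a-1) + 1/2" by (simp add: field_simps)
    then show ?thesis by (simp only: powr_add)
  qed
  have e3: "k powr ((4*a-1)/2) * k powr (1/2) = k powr (2*a)"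
  proof -
    have "2*a = (4*a-1)/2 + 1/2" by (simp add: field_simps)
    then show ?thesis by (simp only: powr_add)
  qed
  have e4: "k powr (-2*a) = 1 / k powr (2*a)"
    by (simp add: powr_minus_divide[symmetric])
  have pos: "0 < s powr (1/2)" "0 < k powr (1/2)" "0 < k powr ((4*a-1)/2)" using s k by auto
  have gen: "\<And>A B C D :: real. B \<noteq> 0 \<Longrightarrow> C \<noteq> 0 \<Longrightarrow> D \<noteq> 0 \<Longrightarrow> (A*B/C)*(1/(2*B*D)) = A*(1/(C*D))/2"
    by (simp add: field_simps)
  show ?thesis unfolding e1 e2 e4 e3[symmetric] unfolding ss sk
    by (rule gen) (use pos in auto)
qed

lemma pw4: fixes s k w :: real assumes s: "0 < s" and k: "k = 1 + w\<^sup>2" and w: "0 < w"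
  shows "sqrt s / sqrt k * (1 + w) = sqrt (s * (1 + 2*w/k))"
proof -
  have kp: "0 < k" using k by (simp add: add_pos_nonneg)
  have "s * (1 + 2*w/k) = (sqrt s / sqrt k * (1 + w))\<^sup>2"
    using s kp by (simp add: power_divide power_mult_distrib k field_simps power2_eq_square)
  then show ?thesis using s kp w by simp
qed

lemma stepD:
  fixes F :: "real \<Rightarrow> real"
  assumes MF[measurable]: "F \<in> borel_measurable borel"
  shows "(\<integral>\<^sup>+u. ennreal (HH a F u w) \<partial>lborel) = (\<integral>\<^sup>+s. ennreal (KK a F w s) \<partial>lborel)"
proof (cases "0 < w \<and> w < 1")
  case False
  then show ?thesis unfolding HH_def KK_def by auto
next
  case True
  define k where "k = 1 + w\<^sup>2"
  have kp: "0 < k" unfolding k_def by (simp add: add_pos_nonneg)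
  have img: "(\<lambda>s. sqrt s / sqrt k) ` {0<..} = {0<..}"
  proof
    show "(\<lambda>s. sqrt s / sqrt k) ` {0<..} \<subseteq> {0<..}" using kp by auto
    show "{0<..} \<subseteq> (\<lambda>s. sqrt s / sqrt k) ` {0<..}"
    proof
      fix u :: real assume u: "u \<in> {0<..}"
      have "sqrt (u\<^sup>2 * k) / sqrt k = u" using u kp by (simp add: real_sqrt_mult)
      moreover have "u\<^sup>2 * k \<in> {0<..}" using u kp by simp
      ultimately show "u \<in> (\<lambda>s. sqrt s / sqrt k) ` {0<..}" by (metis image_eqI)
    qed
  qed
  have MH[measurable]: "(\<lambda>u. HH a F u w) \<in> borel_measurable borel"
    unfolding HH_def by measurable
  have "(\<integral>\<^sup>+u. ennreal (HH a F u w) \<partial>lborel) = (\<integral>\<^sup>+u. ennreal (HH a F u w * indicator ((\<lambda>s. sqrt s / sqrt k) ` {0<..}) u) \<partial>lborel)"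
    unfolding img by (intro nn_integral_cong) (auto simp: HH_def indicator_def)
  also have "\<dots> = (\<integral>\<^sup>+s. ennreal (HH a F (sqrt s / sqrt k) w * (1 / (2 * sqrt s * sqrt k)) * indicator {0<..} s) \<partial>lborel)"
  proof (rule nn_subst_pos)
    show "((\<lambda>s. sqrt s / sqrt k) has_real_derivative 1 / (2 * sqrt s * sqrt k)) (at s)" if "0 < s" for s
    proof -
      have "((\<lambda>s. sqrt s / sqrt k) has_real_derivative (inverse (sqrt s) / 2) / sqrt k) (at s)"
        by (intro DERIV_cdivide DERIV_real_sqrt) (use that in simp)
      moreover have "(inverse (sqrt s) / 2) / sqrt k = 1 / (2 * sqrt s * sqrt k)"
        by (simp add: field_simps)
      ultimately show ?thesis by simp
    qed
    show "continuous_on {0<..} (\<lambda>s. 1 / (2 * sqrt s * sqrt k))"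
      using kp by (intro continuous_intros) auto
  qed (use kp in auto)
  also have "\<dots> = (\<integral>\<^sup>+s. ennreal (KK a F w s) \<partial>lborel)"
  proof (rule nn_integral_cong)
    fix s :: real
    show "ennreal (HH a F (sqrt s / sqrt k) w * (1 / (2 * sqrt s * sqrt k)) * indicator {0<..} s) = ennreal (KK a F w s)"
    proof (cases "0 < s")
      case False
      then show ?thesis by (simp add: KK_def)
    next
      case s: True
      have q: "0 < sqrt s / sqrt k" using s kp by simp
      have sq: "(sqrt s / sqrt k)\<^sup>2 * k = s" using s kp by (simp add: power_divide)
      have "HH a F (sqrt s / sqrt k) w * (1 / (2 * sqrt s * sqrt k)) * indicator {0<..} s
         = 4 / (Gamma a)\<^sup>2 * ((sqrt s / sqrt k) powr (4*a-1) * (1 / (2 * sqrt s * sqrt k))) * w powr (2*a-1) * exp (-((sqrt s / sqrt k)\<^sup>2 * k)) * F (sqrt s / sqrt k * (1 + w))"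
        using q True s unfolding HH_def k_def by (simp add: mult_ac)
      also have "\<dots> = 4 / (Gamma a)\<^sup>2 * (s powr (2*a-1) * k powr (-2*a) / 2) * w powr (2*a-1) * exp (-s) * F (sqrt (s * (1 + 2*w/k)))"
        by (simp only: pw3[OF s kp] sq pw4[OF s k_def] True[THEN conjunct1])
      also have "\<dots> = KK a F w s"
        using True s unfolding KK_def k_def by simp
      finally show ?thesis by simp
    qed
  qed
  finally show ?thesis .
qed

lemma Gamma_dup_real:
  fixes a :: real assumes "0 < a"
  shows "Gamma a * Gamma (a + 1/2) = 2 powr (1 - 2*a) * sqrt pi * Gamma (2*a)"
proof -
  have h1: "complex_of_real a \<notin> \<int>\<^sub>\<le>\<^sub>0" using assms
    by (auto simp: of_real_in_nonpos_Ints_iff)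
  have "complex_of_real (a + 1/2) \<notin> \<int>\<^sub>\<le>\<^sub>0" using assms
    by (auto simp: of_real_in_nonpos_Ints_iff simp del: of_real_add)
  hence h2: "complex_of_real a + 1/2 \<notin> \<int>\<^sub>\<le>\<^sub>0" by simp
  have "Gamma (complex_of_real a) * Gamma (complex_of_real a + 1/2) =
             exp ((1 - 2*complex_of_real a) * of_real (ln 2)) * of_real (sqrt pi) * Gamma (2*complex_of_real a)"
    by (rule Gamma_legendre_duplication[OF h1 h2])
  also have "exp ((1 - 2*complex_of_real a) * of_real (ln 2)) = of_real (exp ((1 - 2*a) * ln 2))"
    by (simp flip: exp_of_real)
  also have "exp ((1 - 2*a) * ln 2) = 2 powr (1 - 2*a)" by (simp add: powr_def)
  finally have "complex_of_real (Gamma a * Gamma (a + 1/2)) = complex_of_real (2 powr (1 - 2*a) * sqrt pi * Gamma (2*a))"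
    by (simp add: Gamma_complex_of_real flip: Gamma_complex_of_real)
  thus ?thesis by (simp only: of_real_eq_iff)
qed

lemma const_eq:
  fixes a :: real assumes a: "0 < a"
  shows "Gamma (a + 1/2) * 8 * 2 powr (2*a-2) / (Gamma (2*a) * Gamma a * sqrt pi) = 4 / (Gamma a)\<^sup>2"
proof -
  have d: "Gamma a * Gamma (a + 1/2) = 2 powr (1 - 2*a) * sqrt pi * Gamma (2*a)" by (rule Gamma_dup_real[OF a])
  have p: "2 powr (2*a-2) * 2 powr (1 - 2*a) = (1/2::real)"
  proof -
    have "2 powr (2*a-2) * 2 powr (1 - 2*a) = (2::real) powr (-1)" by (simp add: powr_add[symmetric])
    then show ?thesis by (simp add: powr_minus_divide)
  qed
  have pos: "0 < Gamma a" "0 < Gamma (2*a)" "0 < sqrt pi" using a by auto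
  have "Gamma (a + 1/2) * 8 * 2 powr (2*a-2) / (Gamma (2*a) * Gamma a * sqrt pi)
      = (Gamma a * Gamma (a + 1/2)) * 8 * 2 powr (2*a-2) / (Gamma (2*a) * (Gamma a)\<^sup>2 * sqrt pi)"
    using pos by (simp add: field_simps power2_eq_square)
  also have "\<dots> = (2 powr (2*a-2) * 2 powr (1 - 2*a)) * 8 * (sqrt pi * Gamma (2*a)) / (Gamma (2*a) * (Gamma a)\<^sup>2 * sqrt pi)"
    unfolding d by (simp add: mult_ac)
  also have "\<dots> = 4 / (Gamma a)\<^sup>2" unfolding p using pos by (simp add: field_simps)
  finally show ?thesis .
qed

lemma beta_pt:
  fixes a s w :: real and F :: "real \<Rightarrow> real"
  assumes a: "0 < a" and s: "0 < s" and w: "0 < w" "w < 1"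
  shows "gamma_density (2*a) s * beta_density a (1/2) (4*w\<^sup>2/(1+w\<^sup>2)\<^sup>2) * F (sqrt (s * (1 + sqrt (4*w\<^sup>2/(1+w\<^sup>2)\<^sup>2))))
         * (8*w*(1-w\<^sup>2)/(1+w\<^sup>2)^3) = 2 * KK a F w s"
proof -
  define k where "k = 1 + w\<^sup>2"
  define m where "m = 1 - w\<^sup>2"
  have kp: "0 < k" unfolding k_def by (simp add: add_pos_nonneg)
  have "w * w < 1 * 1" using w by (intro mult_strict_mono) auto
  then have mp: "0 < m" unfolding m_def by (simp add: power2_eq_square)
  define \<beta> where "\<beta> = 4*w\<^sup>2/k\<^sup>2"
  have bb: "\<beta> = (2*w/k)\<^sup>2" unfolding \<beta>_def by (simp add: power_divide power_mult_distrib)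
  have b1: "sqrt \<beta> = 2*w/k" unfolding bb using w kp by simp
  have e: "k\<^sup>2 - 4*w\<^sup>2 = m\<^sup>2" unfolding k_def m_def by (simp add: power2_eq_square algebra_simps)
  have om: "1 - \<beta> = (m/k)\<^sup>2"
  proof -
    have "(k\<^sup>2 - 4*w\<^sup>2) / k\<^sup>2 = 1 - \<beta>" unfolding \<beta>_def using kp by (simp add: diff_divide_distrib)
    then show ?thesis using e by (simp add: power_divide)
  qed
  have b0: "0 < \<beta>" "\<beta> < 1"
  proof -
    show "0 < \<beta>" unfolding \<beta>_def using w kp by simp
    have "0 < (m/k)\<^sup>2" using mp kp by simp
    then show "\<beta> < 1" using om by linarith
  qed
  have b2: "(1 - \<beta>) powr (1/2 - 1) = k/m"
  proof -
    have "(1 - \<beta>) powr (1/2 - 1) = 1 / (1 - \<beta>) powr (1/2)"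
      by (simp add: powr_minus_divide[symmetric])
    also have "(1 - \<beta>) powr (1/2) = m/k" using b0 om mp kp by (simp add: powr_half_sqrt)
    finally show ?thesis by simp
  qed
  have b3: "\<beta> powr (a-1) = 2 powr (2*a-2) * w powr (2*a-2) * k powr (2-2*a)"
  proof -
    have "\<beta> powr (a-1) = ((2*w/k) powr 2) powr (a-1)" unfolding bb using w kp by simp
    also have "\<dots> = (2*w/k) powr (2*a-2)" by (simp add: powr_powr algebra_simps)
    also have "\<dots> = 2 powr (2*a-2) * w powr (2*a-2) / k powr (2*a-2)" by (simp add: powr_mult powr_divide)
    also have "1 / k powr (2*a-2) = k powr (2-2*a)" by (simp add: powr_minus_divide[symmetric])
    then have "2 powr (2*a-2) * w powr (2*a-2) / k powr (2*a-2) = 2 powr (2*a-2) * w powr (2*a-2) * k powr (2-2*a)"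
      by (metis times_divide_eq_right mult_1_right)
    finally show ?thesis .
  qed
  have b4: "w * w powr (2*a-2) = w powr (2*a-1)" using w by (simp add: powr_mult_base)
  have b5: "k powr (2-2*a) / k\<^sup>2 = k powr (-2*a)"
  proof -
    have "k powr (2-2*a) = k powr 2 * k powr (-2*a)" by (simp add: powr_add[symmetric])
    then show ?thesis using kp by simp
  qed
  have C: "Gamma (a + 1/2) * 8 * 2 powr (2*a-2) / (Gamma (2*a) * Gamma a * sqrt pi) = 4 / (Gamma a)\<^sup>2"
    by (rule const_eq[OF a])
  have pos: "0 < Gamma a" "0 < Gamma (2*a)" "0 < sqrt pi" using a by auto
  have "gamma_density (2*a) s * beta_density a (1/2) \<beta> * F (sqrt (s * (1 + sqrt \<beta>))) * (8*w*m/k^3)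
      = s powr (2*a-1) * exp (-s) / Gamma (2*a) * (Gamma (a + 1/2) / (Gamma a * sqrt pi) * \<beta> powr (a-1) * (1 - \<beta>) powr (1/2 - 1)) * F (sqrt (s * (1 + 2*w/k))) * (8*w*m/k^3)"
    using s b0 by (simp add: gamma_density_def beta_density_def b1 Gamma_one_half_real)
  also have "\<dots> = s powr (2*a-1) * exp (-s) / Gamma (2*a) * (Gamma (a + 1/2) / (Gamma a * sqrt pi) * (2 powr (2*a-2) * w powr (2*a-2) * k powr (2-2*a)) * (k/m)) * F (sqrt (s * (1 + 2*w/k))) * (8*w*m/k^3)"
    by (simp only: b2 b3)
  also have "\<dots> = 2 * ((Gamma (a + 1/2) * 8 * 2 powr (2*a-2) / (Gamma (2*a) * Gamma a * sqrt pi)) / 2 * (w * w powr (2*a-2)) * (k powr (2-2*a) / k\<^sup>2) * s powr (2*a-1) * exp (-s) * F (sqrt (s * (1 + 2*w/k))))"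
    using kp mp pos by (simp add: field_simps power2_eq_square power3_eq_cube)
  also have "\<dots> = 2 * KK a F w s"
    unfolding C b4 b5 unfolding KK_def k_def using w s by (simp add: mult_ac)
  finally show ?thesis unfolding \<beta>_def m_def k_def .
qed

lemma kpos: "0 < 1 + (w::real)\<^sup>2" by (simp add: add_pos_nonneg)
lemma kne: "1 + (w::real)\<^sup>2 \<noteq> 0" using kpos[of w] by linarith

lemma beta_deriv: "((\<lambda>w::real. 4*w\<^sup>2/(1+w\<^sup>2)\<^sup>2) has_real_derivative 8*w*(1-w\<^sup>2)/(1+w\<^sup>2)^3) (at w)"
  apply (rule derivative_eq_intros refl | simp add: kne)+
  apply (simp add: divide_simps kne)
  apply algebra
  done

lemma beta_img: "(\<lambda>w::real. 4*w\<^sup>2/(1+w\<^sup>2)\<^sup>2) ` {0<..<1} = {0<..<1}"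
proof
  show "(\<lambda>w::real. 4*w\<^sup>2/(1+w\<^sup>2)\<^sup>2) ` {0<..<1} \<subseteq> {0<..<1}"
  proof
    fix t assume "t \<in> (\<lambda>w::real. 4*w\<^sup>2/(1+w\<^sup>2)\<^sup>2) ` {0<..<1}"
    then obtain w :: real where w: "0 < w" "w < 1" and t: "t = 4*w\<^sup>2/(1+w\<^sup>2)\<^sup>2" by auto
    have kp: "0 < 1 + w\<^sup>2" by (simp add: add_pos_nonneg)
    have "w * w < 1 * 1" using w by (intro mult_strict_mono) auto
    then have "0 < (1 - w\<^sup>2)\<^sup>2" by (simp add: power2_eq_square)
    then have "4*w\<^sup>2 < (1+w\<^sup>2)\<^sup>2" by (simp add: power2_eq_square algebra_simps)
    then have "t < 1" unfolding t using kp by simp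
    moreover have "0 < t" unfolding t using w kp by simp
    ultimately show "t \<in> {0<..<1}" by simp
  qed
  show "{0<..<1} \<subseteq> (\<lambda>w::real. 4*w\<^sup>2/(1+w\<^sup>2)\<^sup>2) ` {0<..<1}"
  proof
    fix t :: real assume t: "t \<in> {0<..<1}"
    have "continuous_on {0..1} (\<lambda>w::real. 4*w\<^sup>2/(1+w\<^sup>2)\<^sup>2)"
      by (intro continuous_intros) (auto simp: kne)
    then obtain x where x: "0 \<le> x" "x \<le> 1" "4*x\<^sup>2/(1+x\<^sup>2)\<^sup>2 = t"
      using IVT'[of "\<lambda>w::real. 4*w\<^sup>2/(1+w\<^sup>2)\<^sup>2" 0 t 1] t by auto
    have "x \<noteq> 0" using x t by auto
    moreover have "x \<noteq> 1" using x t by auto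
    ultimately show "t \<in> (\<lambda>w::real. 4*w\<^sup>2/(1+w\<^sup>2)\<^sup>2) ` {0<..<1}" using x by force
  qed
qed

lemma stepR:
  fixes F :: "real \<Rightarrow> real"
  assumes a: "0 < a" and MF[measurable]: "F \<in> borel_measurable borel"
  shows "(\<integral>\<^sup>+s. \<integral>\<^sup>+t. ennreal (gamma_density (2*a) s * beta_density a (1/2) t * F (sqrt (s * (1 + sqrt t)))) \<partial>lborel \<partial>lborel)
       = (\<integral>\<^sup>+w. \<integral>\<^sup>+s. ennreal (2 * KK a F w s) \<partial>lborel \<partial>lborel)"
proof -
  have s1: "(\<integral>\<^sup>+s. \<integral>\<^sup>+t. ennreal (gamma_density (2*a) s * beta_density a (1/2) t * F (sqrt (s * (1 + sqrt t)))) \<partial>lborel \<partial>lborel)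
       = (\<integral>\<^sup>+s. \<integral>\<^sup>+w. ennreal (2 * KK a F w s) \<partial>lborel \<partial>lborel)"
  proof (rule nn_integral_cong)
    fix s :: real
    show "(\<integral>\<^sup>+t. ennreal (gamma_density (2*a) s * beta_density a (1/2) t * F (sqrt (s * (1 + sqrt t)))) \<partial>lborel)
        = (\<integral>\<^sup>+w. ennreal (2 * KK a F w s) \<partial>lborel)"
    proof (cases "0 < s")
      case False
      then show ?thesis by (simp add: gamma_density_def KK_def)
    next
      case s: True
      define f where "f t = gamma_density (2*a) s * beta_density a (1/2) t * F (sqrt (s * (1 + sqrt t)))" for t
      have Mf[measurable]: "f \<in> borel_measurable borel"
        unfolding f_def gamma_density_def beta_density_def by measurable
      have "(\<integral>\<^sup>+t. ennreal (f t) \<partial>lborel) = (\<integral>\<^sup>+t. ennreal (f t * indicator ((\<lambda>w::real. 4*w\<^sup>2/(1+w\<^sup>2)\<^sup>2) ` {0<..<1}) t) \<partial>lborel)"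
        unfolding beta_img by (intro nn_integral_cong) (auto simp: f_def beta_density_def indicator_def)
      also have "\<dots> = (\<integral>\<^sup>+w. ennreal (f (4*w\<^sup>2/(1+w\<^sup>2)\<^sup>2) * (8*w*(1-w\<^sup>2)/(1+w\<^sup>2)^3) * indicator {0<..<1} w) \<partial>lborel)"
      proof (rule nn_subst_01)
        show "continuous_on {0<..<1} (\<lambda>w::real. 8*w*(1-w\<^sup>2)/(1+w\<^sup>2)^3)"
          by (intro continuous_intros) (auto simp: kne)
        show "0 \<le> 8*w*(1-w\<^sup>2)/(1+w\<^sup>2)^3" if "0 < w" "w < 1" for w :: real
        proof -
          have "w * w \<le> 1 * 1" using that by (intro mult_mono) auto
          then have "0 \<le> 1 - w\<^sup>2" by (simp add: power2_eq_square)
          then show ?thesis using that kpos[of w] by simp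
        qed
      qed (auto intro: beta_deriv)
      also have "\<dots> = (\<integral>\<^sup>+w. ennreal (2 * KK a F w s) \<partial>lborel)"
      proof (rule nn_integral_cong)
        fix w :: real
        show "ennreal (f (4*w\<^sup>2/(1+w\<^sup>2)\<^sup>2) * (8*w*(1-w\<^sup>2)/(1+w\<^sup>2)^3) * indicator {0<..<1} w) = ennreal (2 * KK a F w s)"
        proof (cases "0 < w \<and> w < 1")
          case True
          then show ?thesis using beta_pt[OF a s, of w F] by (simp add: f_def)
        next
          case False
          then show ?thesis unfolding KK_def by auto
        qed
      qed
      finally show ?thesis unfolding f_def .
    qed
  qed
  have s2: "(\<integral>\<^sup>+s. \<integral>\<^sup>+w. ennreal (2 * KK a F w s) \<partial>lborel \<partial>lborel) = (\<integral>\<^sup>+w. \<integral>\<^sup>+s. ennreal (2 * KK a F w s) \<partial>lborel \<partial>lborel)"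
    by (rule lborel_pair.Fubini') (unfold KK_def, measurable)
  show ?thesis using s1 s2 by simp
qed

lemma KK_nonneg: "(\<And>x. 0 \<le> F x) \<Longrightarrow> 0 \<le> KK a F w s"
  unfolding KK_def by simp

lemma key:
  fixes F :: "real \<Rightarrow> real"
  assumes a: "0 < a" and MF[measurable]: "F \<in> borel_measurable borel" and F0: "\<And>x. 0 \<le> F x"
  shows "(\<integral>\<^sup>+x. \<integral>\<^sup>+y. ennreal (gamma_density a x * gamma_density a y * F (sqrt x + sqrt y)) \<partial>lborel \<partial>lborel)
       = (\<integral>\<^sup>+s. \<integral>\<^sup>+t. ennreal (gamma_density (2*a) s * beta_density a (1/2) t * F (sqrt (s * (1 + sqrt t)))) \<partial>lborel \<partial>lborel)"
proof -
  have MK[measurable]: "(\<lambda>(w, s). KK a F w s) \<in> borel_measurable (lborel \<Otimes>\<^sub>M lborel)"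
    unfolding KK_def by measurable
  have MK1[measurable]: "KK a F w \<in> borel_measurable borel" for w
    unfolding KK_def by measurable
  define Y where "Y = (\<integral>\<^sup>+w. \<integral>\<^sup>+s. ennreal (KK a F w s) \<partial>lborel \<partial>lborel)"
  have X: "(\<integral>\<^sup>+u. \<integral>\<^sup>+v. ennreal (GG a F u v * indicator {..<u} v) \<partial>lborel \<partial>lborel) = Y"
    unfolding Y_def stepB[OF MF] stepD[OF MF] ..
  have L: "(\<integral>\<^sup>+x. \<integral>\<^sup>+y. ennreal (gamma_density a x * gamma_density a y * F (sqrt x + sqrt y)) \<partial>lborel \<partial>lborel) = Y + Y"
    unfolding lhs_step1[OF a MF] sym_step[OF MF] X ..
  have "(\<integral>\<^sup>+w. \<integral>\<^sup>+s. ennreal (2 * KK a F w s) \<partial>lborel \<partial>lborel)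
      = (\<integral>\<^sup>+w. (\<integral>\<^sup>+s. ennreal (KK a F w s) \<partial>lborel) + (\<integral>\<^sup>+s. ennreal (KK a F w s) \<partial>lborel) \<partial>lborel)"
  proof (rule nn_integral_cong)
    fix w
    have "(\<integral>\<^sup>+s. ennreal (2 * KK a F w s) \<partial>lborel) = (\<integral>\<^sup>+s. ennreal (KK a F w s) + ennreal (KK a F w s) \<partial>lborel)"
      by (intro nn_integral_cong) (simp add: KK_nonneg F0 ennreal_plus[symmetric] del: ennreal_plus)
    also have "\<dots> = (\<integral>\<^sup>+s. ennreal (KK a F w s) \<partial>lborel) + (\<integral>\<^sup>+s. ennreal (KK a F w s) \<partial>lborel)"
      by (rule nn_integral_add) auto
    finally show "(\<integral>\<^sup>+s. ennreal (2 * KK a F w s) \<partial>lborel) = (\<integral>\<^sup>+s. ennreal (KK a F w s) \<partial>lborel) + (\<integral>\<^sup>+s. ennreal (KK a F w s) \<partial>lborel)" .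
  qed
  also have "\<dots> = Y + Y" unfolding Y_def
    by (rule nn_integral_add) measurable
  finally have R: "(\<integral>\<^sup>+w. \<integral>\<^sup>+s. ennreal (2 * KK a F w s) \<partial>lborel \<partial>lborel) = Y + Y" .
  show ?thesis unfolding L stepR[OF a MF] R ..
qed

lemma emeasure_distr_pair:
  fixes X Y :: "'a \<Rightarrow> real" and h :: "real \<Rightarrow> real \<Rightarrow> real" and Px Py :: "real \<Rightarrow> real"
  assumes P: "prob_space M"
    and X: "distributed M lborel X (\<lambda>x. ennreal (Px x))"
    and Y: "distributed M lborel Y (\<lambda>x. ennreal (Py x))"
    and ind: "prob_space.indep_var M borel X borel Y"
    and Px0: "\<And>x. 0 \<le> Px x" and Py0: "\<And>x. 0 \<le> Py x"
    and Mh[measurable]: "(\<lambda>(x, y). h x y) \<in> borel_measurable (lborel \<Otimes>\<^sub>M lborel)"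
    and A: "A \<in> sets borel"
  shows "emeasure (distr M borel (\<lambda>\<omega>. h (X \<omega>) (Y \<omega>))) A
       = (\<integral>\<^sup>+x. \<integral>\<^sup>+y. ennreal (Px x * Py y * indicator A (h x y)) \<partial>lborel \<partial>lborel)"
proof -
  interpret prob_space M by (rule P)
  have ind': "indep_var lborel X lborel Y"
    using ind by (simp add: indep_var_def indep_vars_def bool.case_eq_if)
  have J: "distributed M (lborel \<Otimes>\<^sub>M lborel) (\<lambda>\<omega>. (X \<omega>, Y \<omega>)) (\<lambda>(x, y). ennreal (Px x) * ennreal (Py y))"
    by (rule distributed_joint_indep[OF _ _ X Y ind']) (rule lborel.sigma_finite_measure_axioms)+
  have MXY: "(\<lambda>\<omega>. (X \<omega>, Y \<omega>)) \<in> measurable M (lborel \<Otimes>\<^sub>M lborel)"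
    using J by (rule distributed_measurable)
  have Mh': "(\<lambda>z. h (fst z) (snd z)) \<in> measurable (lborel \<Otimes>\<^sub>M lborel) borel"
    using Mh by (simp add: case_prod_beta')
  have "distr M borel (\<lambda>\<omega>. h (X \<omega>) (Y \<omega>)) = distr (distr M (lborel \<Otimes>\<^sub>M lborel) (\<lambda>\<omega>. (X \<omega>, Y \<omega>))) borel (\<lambda>z. h (fst z) (snd z))"
    by (subst distr_distr[OF Mh' MXY]) (simp add: comp_def)
  also have "distr M (lborel \<Otimes>\<^sub>M lborel) (\<lambda>\<omega>. (X \<omega>, Y \<omega>)) = density (lborel \<Otimes>\<^sub>M lborel) (\<lambda>(x, y). ennreal (Px x) * ennreal (Py y))"
    using J by (rule distributed_distr_eq_density)
  finally have D: "distr M borel (\<lambda>\<omega>. h (X \<omega>) (Y \<omega>)) = distr (density (lborel \<Otimes>\<^sub>M lborel) (\<lambda>(x, y). ennreal (Px x) * ennreal (Py y))) borel (\<lambda>z. h (fst z) (snd z))" .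
  have "emeasure (distr M borel (\<lambda>\<omega>. h (X \<omega>) (Y \<omega>))) A
      = (\<integral>\<^sup>+z. (\<lambda>(x, y). ennreal (Px x) * ennreal (Py y)) z * indicator A (h (fst z) (snd z)) \<partial>(lborel \<Otimes>\<^sub>M lborel))"
    unfolding D
    apply (subst emeasure_distr)
      apply (use Mh' A in simp_all)
    apply (subst emeasure_density)
      apply (rule distributed_borel_measurable[OF J])
     apply (rule measurable_sets[OF Mh' A])
    apply (intro nn_integral_cong)
    apply (auto simp: indicator_def space_pair_measure)
    done
  also have "\<dots> = (\<integral>\<^sup>+x. \<integral>\<^sup>+y. ennreal (Px x) * ennreal (Py y) * indicator A (h x y) \<partial>lborel \<partial>lborel)"
  proof -
    have Md[measurable]: "(\<lambda>(x,y). ennreal (Px x) * ennreal (Py y)) \<in> borel_measurable (lborel \<Otimes>\<^sub>M lborel)"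
      using J by (rule distributed_borel_measurable)
    note Mh'[measurable] A[measurable]
    have Mf: "(\<lambda>z. (case z of (x, y) \<Rightarrow> ennreal (Px x) * ennreal (Py y)) * indicator A (h (fst z) (snd z))) \<in> borel_measurable (lborel \<Otimes>\<^sub>M lborel)"
      by measurable
    show ?thesis using lborel.nn_integral_fst[OF Mf] by simp
  qed
  also have "\<dots> = (\<integral>\<^sup>+x. \<integral>\<^sup>+y. ennreal (Px x * Py y * indicator A (h x y)) \<partial>lborel \<partial>lborel)"
    by (intro nn_integral_cong) (simp add: Px0 Py0 ennreal_mult indicator_def)
  finally show ?thesis .
qed

theorem proposition11:
  fixes a :: real
    and M :: "'a measure" and X1 X2 :: "'a \<Rightarrow> real"
    and N :: "'b measure" and G B :: "'b \<Rightarrow> real"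
  assumes "0 < a"
    and "prob_space M"
    and "distributed M lborel X1 (\<lambda>x. ennreal (gamma_density a x))"
    and "distributed M lborel X2 (\<lambda>x. ennreal (gamma_density a x))"
    and "prob_space.indep_var M borel X1 borel X2"
    and "prob_space N"
    and "distributed N lborel G (\<lambda>x. ennreal (gamma_density (2 * a) x))"
    and "distributed N lborel B (\<lambda>x. ennreal (beta_density a (1/2) x))"
    and "prob_space.indep_var N borel G borel B"
  shows "distr M borel (\<lambda>\<omega>. sqrt (X1 \<omega>) + sqrt (X2 \<omega>))
       = distr N borel (\<lambda>\<omega>. sqrt (G \<omega> * (1 + sqrt (B \<omega>))))"
proof -
  note a = assms(1)
  have gd0: "0 \<le> gamma_density t x" if "0 < t" for t x
    using that by (simp add: gamma_density_def)
  have bd0: "0 \<le> beta_density a (1/2) x" for x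
    using a by (simp add: beta_density_def)
  show ?thesis
  proof (rule measure_eqI)
    show "sets (distr M borel (\<lambda>\<omega>. sqrt (X1 \<omega>) + sqrt (X2 \<omega>))) = sets (distr N borel (\<lambda>\<omega>. sqrt (G \<omega> * (1 + sqrt (B \<omega>)))))"
      by simp
  next
    fix A assume "A \<in> sets (distr M borel (\<lambda>\<omega>. sqrt (X1 \<omega>) + sqrt (X2 \<omega>)))"
    then have A[measurable]: "A \<in> sets borel" by simp
    have "emeasure (distr M borel (\<lambda>\<omega>. sqrt (X1 \<omega>) + sqrt (X2 \<omega>))) A
       = (\<integral>\<^sup>+x. \<integral>\<^sup>+y. ennreal (gamma_density a x * gamma_density a y * indicator A (sqrt x + sqrt y)) \<partial>lborel \<partial>lborel)"
      by (rule emeasure_distr_pair[OF assms(2,3,4,5), where h="\<lambda>x y. sqrt x + sqrt y"])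
         (use a gd0 A in auto)
    also have "\<dots> = (\<integral>\<^sup>+s. \<integral>\<^sup>+t. ennreal (gamma_density (2*a) s * beta_density a (1/2) t * indicator A (sqrt (s * (1 + sqrt t)))) \<partial>lborel \<partial>lborel)"
      by (rule key[OF a]) auto
    also have "\<dots> = emeasure (distr N borel (\<lambda>\<omega>. sqrt (G \<omega> * (1 + sqrt (B \<omega>))))) A"
      by (rule emeasure_distr_pair[OF assms(6,7,8,9), where h="\<lambda>x y. sqrt (x * (1 + sqrt y))", symmetric])
         (use a gd0 bd0 A in auto)
    finally show "emeasure (distr M borel (\<lambda>\<omega>. sqrt (X1 \<omega>) + sqrt (X2 \<omega>))) A = emeasure (distr N borel (\<lambda>\<omega>. sqrt (G \<omega> * (1 + sqrt (B \<omega>))))) A" .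
  qed
qed

end
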